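(* Let $n\ge2$, let $\mathcal A$ be a maximal commutative subalgebra of $\mathcal M_d(\mathbb C)$, and let $\mathcal B$ be a maximal subalgebra of $\mathcal T_{n,d}[\mathcal A]$. Then: (i) $\mathcal D_{n,d}[\mathcal A]\subset\mathcal B$; (ii) if $A\in\mathcal B$, then $\mathbf E_k(A)\in\mathcal B$ for all $0\le k\le n-1$; (iii) $\mathcal B$ coincides with the linear span of $\mathbf E_0(\mathcal B),\dots,\mathbf E_{n-1}(\mathcal B)$; (iv) $\mathcal B$ is invariant under the action of $\mathfrak S_{n-1}$, i.e. $\sigma(A)\in\mathcal B$ for all $A\in\mathcal B$, $\sigma\in\mathfrak S_{n-1}$; (v) $\mathbf E_k(\mathcal B)\neq\{0\}$ for every $k=0,\dots,n-1$.
   Context: A block Toeplitz matrix is an $n\times n$ block matrix $A=(A_{i-j})_{i,j=0}^{n-1}$ with $A_m\in\mathcal M_d(\mathbb C)$. For $\mathcal A\subset\mathcal M_d(\mathbb C)$, $\mathcal T_{n,d}[\mathcal A]$ is the set of block Toeplitz matrices with all $A_m\in\mathcal A$, and $\mathcal D_{n,d}[\mathcal A]$ the set of those with additionally $A_m=0$ for $m\ne0$. A maximal subalgebra of $\mathcal T_{n,d}[\mathcal A]$ is a subalgebra of the matrix algebra (a linear subspace closed under multiplication) contained in $\mathcal T_{n,d}[\mathcal A]$ and maximal under inclusion among such. For $k=0,\dots,n-1$, $\mathbf E_k$ maps an $n\times n$ block matrix $T$ to the block matrix whose $(i,j)$ entry is $T_{i,j}$ if $i-j\in\{k,k-n\}$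 and $0$ otherwise. The group $\mathfrak S_{n-1}$ of permutations of $\{1,\dots,n-1\}$ acts on block Toeplitz matrices by $B=\sigma(A)$ with $B_0=A_0$, $B_k=A_{\sigma^{-1}(k)}$, $B_{k-n}=A_{\sigma^{-1}(k)-n}$ for $1\le k\le n-1$. *)

theory Defs
  imports "Jordan_Normal_Form.Matrix" "HOL-Combinatorics.Permutations"
begin

text \<open>Matrices are Jordan_Normal_Form matrices over complex. An n x n block matrix with
d x d blocks is an (n*d) x (n*d) matrix; block (i,j) has entries at rows i*d+a, columns j*d+b.\<close>

definition mat_subspace :: "nat \<Rightarrow> complex mat set \<Rightarrow> bool" where
  "mat_subspace N S \<longleftrightarrow> S \<subseteq> carrier_mat N N \<and> 0\<^sub>m N N \<in> S \<and>
     (\<forall>X\<in>S. \<forall>Y\<in>S. X + Y \<in> S) \<and> (\<forall>c. \<forall>X\<in>S. c \<cdot>\<^sub>m X \<in> S)"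

definition mat_subalg :: "nat \<Rightarrow> complex mat set \<Rightarrow> bool" where
  "mat_subalg N S \<longleftrightarrow> mat_subspace N S \<and> (\<forall>X\<in>S. \<forall>Y\<in>S. X * Y \<in> S)"

definition comm_mat_subalg :: "nat \<Rightarrow> complex mat set \<Rightarrow> bool" where
  "comm_mat_subalg N S \<longleftrightarrow> mat_subalg N S \<and> (\<forall>X\<in>S. \<forall>Y\<in>S. X * Y = Y * X)"

definition maximal_comm_subalg :: "nat \<Rightarrow> complex mat set \<Rightarrow> bool" where
  "maximal_comm_subalg N S \<longleftrightarrow> comm_mat_subalg N S \<and>
     (\<forall>S'. comm_mat_subalg N S' \<and> S \<subseteq> S' \<longrightarrow> S' = S)"

definition maximal_subalg_in :: "nat \<Rightarrow> complex mat set \<Rightarrow> complex mat set \<Rightarrow> bool" where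
  "maximal_subalg_in N T S \<longleftrightarrow> mat_subalg N S \<and> S \<subseteq> T \<and>
     (\<forall>S'. mat_subalg N S' \<and> S \<subseteq> S' \<and> S' \<subseteq> T \<longrightarrow> S' = S)"

definition mat_span :: "nat \<Rightarrow> complex mat set \<Rightarrow> complex mat set" where
  "mat_span N X = \<Inter>{S. mat_subspace N S \<and> X \<subseteq> S}"

definition toep :: "nat \<Rightarrow> nat \<Rightarrow> (int \<Rightarrow> complex mat) \<Rightarrow> complex mat" where
  "toep n d A = mat (n*d) (n*d)
     (\<lambda>(r,c). A (int (r div d) - int (c div d)) $$ (r mod d, c mod d))"

definition toeplitz_set :: "nat \<Rightarrow> nat \<Rightarrow> complex mat set \<Rightarrow> complex mat set" where
  "toeplitz_set n d \<A> = {toep n d A | A. \<forall>m\<in>{-(int n - 1)..int n - 1}. A m \<in> \<A>}"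

definition diag_toeplitz_set :: "nat \<Rightarrow> nat \<Rightarrow> complex mat set \<Rightarrow> complex mat set" where
  "diag_toeplitz_set n d \<A> = {toep n d A | A. (\<forall>m\<in>{-(int n - 1)..int n - 1}. A m \<in> \<A>)
      \<and> (\<forall>m\<in>{-(int n - 1)..int n - 1}. m \<noteq> 0 \<longrightarrow> A m = 0\<^sub>m d d)}"

definition E_op :: "nat \<Rightarrow> nat \<Rightarrow> nat \<Rightarrow> complex mat \<Rightarrow> complex mat" where
  "E_op n d k T = mat (n*d) (n*d)
     (\<lambda>(r,c). if int (r div d) - int (c div d) = int k \<or>
                 int (r div d) - int (c div d) = int k - int n
              then T $$ (r,c) else 0)"

definition blk :: "nat \<Rightarrow> complex mat \<Rightarrow> nat \<Rightarrow> nat \<Rightarrow> complex mat" where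
  "blk d T i j = mat d d (\<lambda>(a,b). T $$ (i*d+a, j*d+b))"

definition toep_symbol :: "nat \<Rightarrow> complex mat \<Rightarrow> int \<Rightarrow> complex mat" where
  "toep_symbol d T m = (if m \<ge> 0 then blk d T (nat m) 0 else blk d T 0 (nat (-m)))"

definition perm_act :: "nat \<Rightarrow> nat \<Rightarrow> (nat \<Rightarrow> nat) \<Rightarrow> complex mat \<Rightarrow> complex mat" where
  "perm_act n d \<sigma> T = toep n d (\<lambda>m.
      if m = 0 then toep_symbol d T 0
      else if m > 0 then toep_symbol d T (int (inv_into UNIV \<sigma> (nat m)))
      else toep_symbol d T (int (inv_into UNIV \<sigma> (nat (m + int n))) - int n))"

end

theory Submission
  imports Defs
begin

lemma divmod_block:
  fixes d :: nat assumes "d \<ge> 1" "a < d"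
  shows "(i*d + a) div d = i" "(i*d + a) mod d = a"
  using assms by auto

lemma block_lt: fixes d::nat assumes "i < n" "a < d" shows "i*d + a < n*d"
proof -
  have "i*d + a < i*d + d" using assms by simp
  also have "\<dots> = (Suc i)*d" by simp
  also have "\<dots> \<le> n*d" using assms by (intro mult_right_mono) auto
  finally show ?thesis .
qed

lemma div_lt_n: fixes d::nat assumes "r < n*d" shows "r div d < n"
  using assms by (simp add: less_mult_imp_div_less)

lemma sum_split_blocks:
  fixes f :: "nat \<Rightarrow> 'a::comm_monoid_add"
  shows "(\<Sum>k<n*d. f k) = (\<Sum>l<n. \<Sum>b<d. f (l*d+b))"
proof (induction n)
  case 0 then show ?case by simp
next
  case (Suc n)
  have e: "{..<Suc n*d} = {..<n*d} \<union> {n*d..<n*d+d}" by auto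
  have "(\<Sum>k<Suc n*d. f k) = (\<Sum>k<n*d. f k) + (\<Sum>k\<in>{n*d..<n*d+d}. f k)"
    unfolding e by (rule sum.union_disjoint) auto
  also have "(\<Sum>k\<in>{n*d..<n*d+d}. f k) = (\<Sum>b<d. f (n*d+b))"
    using sum.shift_bounds_nat_ivl[of f 0 "n*d" d]
    by (simp add: atLeast0LessThan add.commute)
  finally show ?case using Suc by simp
qed


lemma toep_idx: "r < n*d \<Longrightarrow> c < n*d \<Longrightarrow>
  toep n d A $$ (r,c) = A (int (r div d) - int (c div d)) $$ (r mod d, c mod d)"
  unfolding toep_def by auto

lemma toep_dim[simp]: "dim_row (toep n d A) = n*d" "dim_col (toep n d A) = n*d"
  unfolding toep_def by auto

lemma toep_carrier[simp]: "toep n d A \<in> carrier_mat (n*d) (n*d)"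
  unfolding carrier_mat_def by auto

locale TT =
  fixes n d :: nat and Al :: "complex mat set"
  assumes n2: "n \<ge> 2" and d1: "d \<ge> 1" and sub: "comm_mat_subalg d Al"
    and one: "1\<^sub>m d \<in> Al"
begin

definition R :: "int set" where "R = {-(int n - 1)..int n - 1}"

lemma Al_carrier: "X \<in> Al \<Longrightarrow> X \<in> carrier_mat d d"
  using sub unfolding comm_mat_subalg_def mat_subalg_def mat_subspace_def by auto
lemma Al_zero: "0\<^sub>m d d \<in> Al"
  using sub unfolding comm_mat_subalg_def mat_subalg_def mat_subspace_def by auto
lemma Al_add: "X \<in> Al \<Longrightarrow> Y \<in> Al \<Longrightarrow> X + Y \<in> Al"
  using sub unfolding comm_mat_subalg_def mat_subalg_def mat_subspace_def by auto
lemma Al_smult: "X \<in> Al \<Longrightarrow> c \<cdot>\<^sub>m X \<in> Al"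
  using sub unfolding comm_mat_subalg_def mat_subalg_def mat_subspace_def by auto
lemma Al_mult: "X \<in> Al \<Longrightarrow> Y \<in> Al \<Longrightarrow> X * Y \<in> Al"
  using sub unfolding comm_mat_subalg_def mat_subalg_def mat_subspace_def by auto
lemma Al_comm: "X \<in> Al \<Longrightarrow> Y \<in> Al \<Longrightarrow> X * Y = Y * X"
  using sub unfolding comm_mat_subalg_def mat_subalg_def mat_subspace_def by auto

lemma mod_lt: "r mod d < d" using d1 by auto

lemma idx_R: "r < n*d \<Longrightarrow> c < n*d \<Longrightarrow> int (r div d) - int (c div d) \<in> R"
  using div_lt_n[of r n d] div_lt_n[of c n d] unfolding R_def by auto

lemma idx_R2: "i < n \<Longrightarrow> j < n \<Longrightarrow> int i - int j \<in> R"
  unfolding R_def by auto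

definition good :: "(int \<Rightarrow> complex mat) \<Rightarrow> bool" where
  "good A \<longleftrightarrow> (\<forall>m\<in>R. A m \<in> Al)"

lemma good_carrier: "good A \<Longrightarrow> m \<in> R \<Longrightarrow> A m \<in> carrier_mat d d"
  unfolding good_def using Al_carrier by auto

lemma toep_symbol_toep: assumes "m \<in> R" "A m \<in> carrier_mat d d"
  shows "toep_symbol d (toep n d A) m = A m"
proof (cases "m \<ge> 0")
  case True
  define k where "k = nat m"
  have k: "k < n" "m = int k" using assms(1) True unfolding R_def k_def by auto
  show ?thesis
  proof (rule eq_matI)
    fix a b assume ab: "a < dim_row (A m)" "b < dim_col (A m)"
    hence ab': "a < d" "b < d" using assms(2) by auto
    have "toep_symbol d (toep n d A) m $$ (a,b) = toep n d A $$ (k*d+a, b)"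
      unfolding toep_symbol_def blk_def using True ab' k_def by simp
    also have "\<dots> = A m $$ (a,b)"
      using block_lt[OF k(1) ab'(1)] ab' d1 k(2) \<open>k < n\<close>
      by (subst toep_idx) (auto intro: less_le_trans)
    finally show "toep_symbol d (toep n d A) m $$ (a,b) = A m $$ (a,b)" .
  qed (use assms True in \<open>auto simp: toep_symbol_def blk_def\<close>)
next
  case False
  define k where "k = nat (-m)"
  have k: "k < n" "m = - int k" using assms(1) False unfolding R_def k_def by auto
  show ?thesis
  proof (rule eq_matI)
    fix a b assume ab: "a < dim_row (A m)" "b < dim_col (A m)"
    hence ab': "a < d" "b < d" using assms(2) by auto
    have "toep_symbol d (toep n d A) m $$ (a,b) = toep n d A $$ (a, k*d+b)"
      unfolding toep_symbol_def blk_def using False ab' k_def by simp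
    also have "\<dots> = A m $$ (a,b)"
      using block_lt[OF k(1) ab'(2)] ab' d1 k(2) \<open>k < n\<close>
      by (subst toep_idx) (auto intro: less_le_trans)
    finally show "toep_symbol d (toep n d A) m $$ (a,b) = A m $$ (a,b)" .
  qed (use assms False in \<open>auto simp: toep_symbol_def blk_def\<close>)
qed

lemma toep_eq: "good A \<Longrightarrow> good B \<Longrightarrow> toep n d A = toep n d B \<Longrightarrow> m \<in> R \<Longrightarrow> A m = B m"
  by (metis good_carrier toep_symbol_toep)

lemma toep_cong: "(\<And>m. m \<in> R \<Longrightarrow> A m = B m) \<Longrightarrow> toep n d A = toep n d B"
  by (rule eq_matI) (auto simp: toep_idx idx_R)

lemma toep_zero: "toep n d (\<lambda>_. 0\<^sub>m d d) = 0\<^sub>m (n*d) (n*d)"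
  by (rule eq_matI) (auto simp: toep_idx mod_lt)

lemma toep_add: assumes "good A" "good B"
  shows "toep n d A + toep n d B = toep n d (\<lambda>m. A m + B m)"
proof (rule eq_matI)
  fix r c assume rc: "r < dim_row (toep n d (\<lambda>m. A m + B m))" "c < dim_col (toep n d (\<lambda>m. A m + B m))"
  hence rc': "r < n*d" "c < n*d" by auto
  have "B (int (r div d) - int (c div d)) \<in> carrier_mat d d"
    using good_carrier[OF assms(2) idx_R[OF rc']] .
  thus "(toep n d A + toep n d B) $$ (r,c) = toep n d (\<lambda>m. A m + B m) $$ (r,c)"
    using rc' by (simp add: toep_idx mod_lt)
qed auto

lemma toep_smult: assumes "good A"
  shows "x \<cdot>\<^sub>m toep n d A = toep n d (\<lambda>m. x \<cdot>\<^sub>m A m)"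
proof (rule eq_matI)
  fix r c assume rc: "r < dim_row (toep n d (\<lambda>m. x \<cdot>\<^sub>m A m))" "c < dim_col (toep n d (\<lambda>m. x \<cdot>\<^sub>m A m))"
  hence rc': "r < n*d" "c < n*d" by auto
  have "A (int (r div d) - int (c div d)) \<in> carrier_mat d d"
    using good_carrier[OF assms(1) idx_R[OF rc']] .
  thus "(x \<cdot>\<^sub>m toep n d A) $$ (r,c) = toep n d (\<lambda>m. x \<cdot>\<^sub>m A m) $$ (r,c)"
    using rc' by (simp add: toep_idx mod_lt)
qed auto


fun msum :: "(nat \<Rightarrow> complex mat) \<Rightarrow> nat \<Rightarrow> complex mat" where
  "msum f 0 = 0\<^sub>m d d"
| "msum f (Suc k) = msum f k + f k"

lemma msum_carrier: "(\<And>l. l < k \<Longrightarrow> f l \<in> carrier_mat d d) \<Longrightarrow> msum f k \<in> carrier_mat d d"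
  by (induction k) auto

lemma msum_idx: "(\<And>l. l < k \<Longrightarrow> f l \<in> carrier_mat d d) \<Longrightarrow> a < d \<Longrightarrow> b < d \<Longrightarrow>
   msum f k $$ (a,b) = (\<Sum>l<k. f l $$ (a,b))"
proof (induction k)
  case (Suc k)
  have c: "f k \<in> carrier_mat d d" using Suc.prems by auto
  have ih: "msum f k $$ (a,b) = (\<Sum>l<k. f l $$ (a,b))" using Suc by auto
  have "(msum f k + f k) $$ (a,b) = msum f k $$ (a,b) + f k $$ (a,b)"
    using c Suc.prems by (intro index_add_mat(1)) auto
  then show ?case using ih by simp
qed simp

lemma msum_Al: "(\<And>l. l < k \<Longrightarrow> f l \<in> Al) \<Longrightarrow> msum f k \<in> Al"
  by (induction k) (auto intro: Al_add Al_zero)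

lemma msum_front: "(\<And>l. l < Suc k \<Longrightarrow> f l \<in> carrier_mat d d) \<Longrightarrow>
   msum f (Suc k) = f 0 + msum (\<lambda>l. f (Suc l)) k"
proof (induction k)
  case 0 then show ?case by (auto intro!: eq_matI)
next
  case (Suc k)
  have c: "\<And>l. l < Suc k \<Longrightarrow> f l \<in> carrier_mat d d" using Suc.prems by auto
  have "msum f (Suc (Suc k)) = (f 0 + msum (\<lambda>l. f (Suc l)) k) + f (Suc k)"
    using Suc.IH[OF c] by simp
  also have "\<dots> = f 0 + (msum (\<lambda>l. f (Suc l)) k + f (Suc k))"
    by (rule assoc_add_mat[of _ d d]) (use Suc.prems in \<open>auto intro!: msum_carrier\<close>)
  finally show ?case by simp
qed

definition Mb :: "(int \<Rightarrow> complex mat) \<Rightarrow> (int \<Rightarrow> complex mat) \<Rightarrow> nat \<Rightarrow> nat \<Rightarrow> complex mat" where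
  "Mb A B i j = msum (\<lambda>l. A (int i - int l) * B (int l - int j)) n"

lemma Mb_carrier: "good A \<Longrightarrow> good B \<Longrightarrow> i < n \<Longrightarrow> j < n \<Longrightarrow> Mb A B i j \<in> carrier_mat d d"
  unfolding Mb_def
proof (rule msum_carrier)
  fix l assume "good A" "good B" "i < n" "j < n" "l < n"
  thus "A (int i - int l) * B (int l - int j) \<in> carrier_mat d d"
    by (intro mult_carrier_mat[of _ d d]) (auto intro: good_carrier idx_R2)
qed

lemma Mb_Al: "good A \<Longrightarrow> good B \<Longrightarrow> i < n \<Longrightarrow> j < n \<Longrightarrow> Mb A B i j \<in> Al"
  unfolding Mb_def by (rule msum_Al) (auto intro!: Al_mult idx_R2 simp: good_def)

lemma toep_mult: assumes A: "good A" and B: "good B"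
  shows "toep n d A * toep n d B = mat (n*d) (n*d) (\<lambda>(r,c). Mb A B (r div d) (c div d) $$ (r mod d, c mod d))"
proof (rule eq_matI)
  fix r c assume rc: "r < dim_row (mat (n*d) (n*d) (\<lambda>(r,c). Mb A B (r div d) (c div d) $$ (r mod d, c mod d)))"
     "c < dim_col (mat (n*d) (n*d) (\<lambda>(r,c). Mb A B (r div d) (c div d) $$ (r mod d, c mod d)))"
  hence rc': "r < n*d" "c < n*d" by auto
  define i where "i = r div d"
  define j where "j = c div d"
  define a where "a = r mod d"
  define e where "e = c mod d"
  have ij: "i < n" "j < n" "a < d" "e < d" using div_lt_n rc' mod_lt unfolding i_def j_def a_def e_def by auto
  have cA: "\<And>l. l < n \<Longrightarrow> A (int i - int l) \<in> carrier_mat d d"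
    using good_carrier[OF A] idx_R2 ij by auto
  have cB: "\<And>l. l < n \<Longrightarrow> B (int l - int j) \<in> carrier_mat d d"
    using good_carrier[OF B] idx_R2 ij by auto
  have "(toep n d A * toep n d B) $$ (r,c) = (\<Sum>k<n*d. toep n d A $$ (r,k) * toep n d B $$ (k,c))"
    using rc' by (simp add: scalar_prod_def atLeast0LessThan)
  also have "\<dots> = (\<Sum>l<n. \<Sum>b<d. toep n d A $$ (r,l*d+b) * toep n d B $$ (l*d+b,c))"
    by (rule sum_split_blocks)
  also have "\<dots> = (\<Sum>l<n. \<Sum>b<d. A (int i - int l) $$ (a,b) * B (int l - int j) $$ (b,e))"
  proof (intro sum.cong refl)
    fix l b assume lb: "l \<in> {..<n}" "b \<in> {..<d}"
    have lt: "l*d+b < n*d" using block_lt lb by auto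
    show "toep n d A $$ (r,l*d+b) * toep n d B $$ (l*d+b,c) = A (int i - int l) $$ (a,b) * B (int l - int j) $$ (b,e)"
      using lt rc' lb by (simp add: toep_idx i_def j_def a_def e_def)
  qed
  also have "\<dots> = (\<Sum>l<n. (A (int i - int l) * B (int l - int j)) $$ (a,e))"
  proof (intro sum.cong refl)
    fix l assume l: "l \<in> {..<n}"
    show "(\<Sum>b<d. A (int i - int l) $$ (a,b) * B (int l - int j) $$ (b,e)) = (A (int i - int l) * B (int l - int j)) $$ (a,e)"
      using cA[of l] cB[of l] l ij by (simp add: scalar_prod_def atLeast0LessThan)
  qed
  also have "\<dots> = Mb A B i j $$ (a,e)"
    unfolding Mb_def using cA cB ij by (subst msum_idx) (auto intro!: mult_carrier_mat[of _ d d])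
  finally show "(toep n d A * toep n d B) $$ (r,c) = mat (n*d) (n*d) (\<lambda>(r,c). Mb A B (r div d) (c div d) $$ (r mod d, c mod d)) $$ (r,c)"
    using rc' by (simp add: i_def j_def a_def e_def)
qed auto


lemma AB_cong: "x = x' \<Longrightarrow> y = y' \<Longrightarrow> (A::int\<Rightarrow>complex mat) x * B y = A x' * B y'" by simp

definition cond :: "(int \<Rightarrow> complex mat) \<Rightarrow> (int \<Rightarrow> complex mat) \<Rightarrow> bool" where
  "cond A B \<longleftrightarrow> (\<forall>p\<in>{1..<n}. \<forall>q\<in>{1..<n}.
      A (int p) * B (int q - int n) = A (int p - int n) * B (int q))"

lemma n_Suc: "Suc (n-1) = n" using n2 by simp

lemma prod_carrier: "good A \<Longrightarrow> good B \<Longrightarrow> x \<in> R \<Longrightarrow> y \<in> R \<Longrightarrow> A x * B y \<in> carrier_mat d d"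
  by (intro mult_carrier_mat[of _ d d]) (auto intro: good_carrier)

lemma Mb_shift1: assumes A: "good A" and B: "good B" and ij: "i+1 < n" "j+1 < n"
  shows "Mb A B (Suc i) (Suc j) = A (int i + 1) * B (- int j - 1)
     + msum (\<lambda>l. A (int i - int l) * B (int l - int j)) (n-1)"
proof -
  have "Mb A B (Suc i) (Suc j) = msum (\<lambda>l. A (int (Suc i) - int l) * B (int l - int (Suc j))) (Suc (n-1))"
    unfolding Mb_def using n_Suc by simp
  also have "\<dots> = A (int (Suc i) - int 0) * B (int 0 - int (Suc j))
      + msum (\<lambda>l. A (int (Suc i) - int (Suc l)) * B (int (Suc l) - int (Suc j))) (n-1)"
    by (rule msum_front) (use A B ij n_Suc in \<open>auto intro!: prod_carrier simp: R_def\<close>)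
  also have "(\<lambda>l. A (int (Suc i) - int (Suc l)) * B (int (Suc l) - int (Suc j))) =
     (\<lambda>l. A (int i - int l) * B (int l - int j))"
    by (rule ext, rule AB_cong) auto
  also have "A (int (Suc i) - int 0) * B (int 0 - int (Suc j)) = A (int i + 1) * B (- int j - 1)"
    by (rule AB_cong) auto
  finally show ?thesis .
qed

lemma Mb_shift2: assumes A: "good A" and B: "good B" and ij: "i < n" "j < n"
  shows "Mb A B i j = msum (\<lambda>l. A (int i - int l) * B (int l - int j)) (n-1)
     + A (int i + 1 - int n) * B (int n - 1 - int j)"
proof -
  have "Mb A B i j = msum (\<lambda>l. A (int i - int l) * B (int l - int j)) (Suc (n-1))"
    unfolding Mb_def using n_Suc by simp
  also have "\<dots> = msum (\<lambda>l. A (int i - int l) * B (int l - int j)) (n-1)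
     + A (int i - int (n-1)) * B (int (n-1) - int j)" by simp
  also have "A (int i - int (n-1)) * B (int (n-1) - int j) = A (int i + 1 - int n) * B (int n - 1 - int j)"
    by (rule AB_cong) (use n2 in auto)
  finally show ?thesis .
qed

lemma cond_inv: assumes c: "cond A B" and A: "good A" and B: "good B" and ij: "i+1 < n" "j+1 < n"
  shows "Mb A B (Suc i) (Suc j) = Mb A B i j"
proof -
  define X where "X = msum (\<lambda>l. A (int i - int l) * B (int l - int j)) (n-1)"
  have Xc: "X \<in> carrier_mat d d" unfolding X_def
    by (rule msum_carrier) (use A B ij in \<open>auto intro!: prod_carrier idx_R2\<close>)
  have pq: "i+1 \<in> {1..<n}" "n-1-j \<in> {1..<n}" using ij by auto
  have cd: "\<And>p q. p \<in> {1..<n} \<Longrightarrow> q \<in> {1..<n} \<Longrightarrow>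
     A (int p) * B (int q - int n) = A (int p - int n) * B (int q)"
    using c unfolding cond_def by blast
  have "A (int (i+1)) * B (int (n-1-j) - int n) = A (int (i+1) - int n) * B (int (n-1-j))"
    by (rule cd[OF pq])
  note q1 = this
  have q2: "A (int (i+1)) * B (int (n-1-j) - int n) = A (int i + 1) * B (- int j - 1)"
    by (rule AB_cong) (use ij in auto)
  have q3: "A (int (i+1) - int n) * B (int (n-1-j)) = A (int i + 1 - int n) * B (int n - 1 - int j)"
    by (rule AB_cong) (use ij in auto)
  have e: "A (int i + 1) * B (- int j - 1) = A (int i + 1 - int n) * B (int n - 1 - int j)"
    using trans[OF trans[OF q2[symmetric] q1] q3] .
  have cc: "A (int i + 1 - int n) * B (int n - 1 - int j) \<in> carrier_mat d d"
    using A B ij by (intro prod_carrier) (auto simp: R_def)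
  have s1: "Mb A B (Suc i) (Suc j) = A (int i + 1 - int n) * B (int n - 1 - int j) + X"
    using Mb_shift1[OF A B ij] e unfolding X_def by simp
  have s2: "Mb A B i j = X + A (int i + 1 - int n) * B (int n - 1 - int j)"
    using Mb_shift2[OF A B, of i j] ij unfolding X_def by simp
  show ?thesis unfolding s1 s2
    using cc Xc by (rule comm_add_mat[of _ d d])
qed

lemma cancel_mat: fixes c1 c2 X :: "complex mat" assumes c1: "c1 \<in> carrier_mat d d" and c2: "c2 \<in> carrier_mat d d" and Xc: "X \<in> carrier_mat d d"
   and e: "c1 + X = X + c2" shows "c1 = c2"
proof (rule eq_matI)
  fix a b assume ab: "a < dim_row c2" "b < dim_col c2"
  have ab': "a < d" "b < d" using ab c2 by auto
  have h1: "(c1 + X) $$ (a,b) = c1 $$ (a,b) + X $$ (a,b)" using ab' Xc by (intro index_add_mat(1)) auto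
  have h2: "(X + c2) $$ (a,b) = X $$ (a,b) + c2 $$ (a,b)" using ab' c2 by (intro index_add_mat(1)) auto
  have "(c1 + X) $$ (a,b) = (X + c2) $$ (a,b)" using e by (rule arg_cong)
  hence hh: "c1 $$ (a,b) + X $$ (a,b) = X $$ (a,b) + c2 $$ (a,b)" unfolding h1 h2 .
  have "X $$ (a,b) + c1 $$ (a,b) = X $$ (a,b) + c2 $$ (a,b)"
    using trans[OF add.commute[of "X $$ (a,b)" "c1 $$ (a,b)"] hh] .
  thus "c1 $$ (a,b) = c2 $$ (a,b)" by (rule add_left_imp_eq)
next
  show "dim_row c1 = dim_row c2" using c1 c2 by auto
next
  show "dim_col c1 = dim_col c2" using c1 c2 by auto
qed

lemma inv_cond: assumes inv: "\<And>i j. i+1 < n \<Longrightarrow> j+1 < n \<Longrightarrow> Mb A B (Suc i) (Suc j) = Mb A B i j"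
  and A: "good A" and B: "good B"
  shows "cond A B"
  unfolding cond_def
proof (intro ballI)
  fix p q assume pq: "p \<in> {1..<n}" "q \<in> {1..<n}"
  define i where "i = p - 1"
  define j where "j = n - 1 - q"
  have ij: "i+1 < n" "j+1 < n" using pq unfolding i_def j_def by auto
  define X where "X = msum (\<lambda>l. A (int i - int l) * B (int l - int j)) (n-1)"
  have Xc: "X \<in> carrier_mat d d" unfolding X_def
    by (rule msum_carrier) (use A B ij in \<open>auto intro!: prod_carrier idx_R2\<close>)
  have s1: "Mb A B (Suc i) (Suc j) = A (int i + 1) * B (- int j - 1) + X"
    unfolding X_def by (rule Mb_shift1[OF A B ij])
  have s2: "Mb A B i j = X + A (int i + 1 - int n) * B (int n - 1 - int j)"
    unfolding X_def using ij by (intro Mb_shift2[OF A B]) auto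
  have e: "A (int i + 1) * B (- int j - 1) + X = X + A (int i + 1 - int n) * B (int n - 1 - int j)"
    using inv[OF ij] unfolding s1 s2 .
  have c1: "A (int i + 1) * B (- int j - 1) \<in> carrier_mat d d"
    using A B ij by (intro prod_carrier) (auto simp: R_def)
  have c2: "A (int i + 1 - int n) * B (int n - 1 - int j) \<in> carrier_mat d d"
    using A B ij by (intro prod_carrier) (auto simp: R_def)
  have q1: "A (int i + 1) * B (- int j - 1) = A (int i + 1 - int n) * B (int n - 1 - int j)"
    by (rule cancel_mat[OF c1 c2 Xc e])
  have q2: "A (int i + 1) * B (- int j - 1) = A (int p) * B (int q - int n)"
    by (rule AB_cong) (use pq in \<open>auto simp: i_def j_def\<close>)
  have q3: "A (int i + 1 - int n) * B (int n - 1 - int j) = A (int p - int n) * B (int q)"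
    by (rule AB_cong) (use pq in \<open>auto simp: i_def j_def\<close>)
  show "A (int p) * B (int q - int n) = A (int p - int n) * B (int q)"
    using trans[OF trans[OF q2[symmetric] q1] q3] .
qed

definition Pm :: "(int \<Rightarrow> complex mat) \<Rightarrow> (int \<Rightarrow> complex mat) \<Rightarrow> int \<Rightarrow> complex mat" where
  "Pm A B k = (if k \<ge> 0 then Mb A B (nat k) 0 else Mb A B 0 (nat (-k)))"

lemma inv_shift: assumes inv: "\<And>i j. i+1 < n \<Longrightarrow> j+1 < n \<Longrightarrow> Mb A B (Suc i) (Suc j) = Mb A B i j"
  shows "i + t < n \<Longrightarrow> j + t < n \<Longrightarrow> Mb A B (i+t) (j+t) = Mb A B i j"
proof (induction t)
  case (Suc t)
  hence "Mb A B (Suc (i+t)) (Suc (j+t)) = Mb A B (i+t) (j+t)" by (intro inv) auto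
  thus ?case using Suc by simp
qed simp

lemma inv_diag: assumes inv: "\<And>i j. i+1 < n \<Longrightarrow> j+1 < n \<Longrightarrow> Mb A B (Suc i) (Suc j) = Mb A B i j"
  and ij: "i < n" "j < n"
  shows "Mb A B i j = Pm A B (int i - int j)"
proof (cases "j \<le> i")
  case True
  have "Mb A B ((i-j)+j) (0+j) = Mb A B (i-j) 0" by (rule inv_shift[OF inv]) (use ij True in auto)
  thus ?thesis using True unfolding Pm_def by (simp add: nat_diff_distrib)
next
  case False
  have "Mb A B (0+i) ((j-i)+i) = Mb A B 0 (j-i)" by (rule inv_shift[OF inv]) (use ij False in auto)
  thus ?thesis using False unfolding Pm_def by (simp add: nat_diff_distrib)
qed

lemma Pm_good: "good A \<Longrightarrow> good B \<Longrightarrow> good (Pm A B)"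
  unfolding good_def[of "Pm A B"]
proof
  fix m assume A: "good A" and B: "good B" and m: "m \<in> R"
  show "Pm A B m \<in> Al"
  proof (cases "m \<ge> 0")
    case True
    have "nat m < n" using m True unfolding R_def by auto
    thus ?thesis using True unfolding Pm_def using Mb_Al[OF A B, of "nat m" 0] n2 by simp
  next
    case False
    have "nat (-m) < n" using m False unfolding R_def by auto
    thus ?thesis using False unfolding Pm_def using Mb_Al[OF A B, of 0 "nat (-m)"] n2 by simp
  qed
qed

lemma toep_prod: assumes c: "cond A B" and A: "good A" and B: "good B"
  shows "toep n d A * toep n d B = toep n d (Pm A B)"
proof -
  have inv: "\<And>i j. i+1 < n \<Longrightarrow> j+1 < n \<Longrightarrow> Mb A B (Suc i) (Suc j) = Mb A B i j"
    by (rule cond_inv[OF c A B])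
  show ?thesis unfolding toep_mult[OF A B]
  proof (rule eq_matI)
    fix r c assume rc: "r < dim_row (toep n d (Pm A B))" "c < dim_col (toep n d (Pm A B))"
    hence rc': "r < n*d" "c < n*d" by auto
    have "Mb A B (r div d) (c div d) = Pm A B (int (r div d) - int (c div d))"
      by (rule inv_diag[OF inv]) (use div_lt_n rc' in auto)
    thus "mat (n*d) (n*d) (\<lambda>(r,c). Mb A B (r div d) (c div d) $$ (r mod d, c mod d)) $$ (r,c) = toep n d (Pm A B) $$ (r,c)"
      using rc' by (simp add: toep_idx)
  qed simp_all
qed

lemma prod_cond: assumes A: "good A" and B: "good B" and C: "good C"
  and e: "toep n d A * toep n d B = toep n d C"
  shows "cond A B"
proof -
  have M: "Mb A B i j = C (int i - int j)" if ij: "i < n" "j < n" for i j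
  proof -
    have cc: "C (int i - int j) \<in> carrier_mat d d" using good_carrier[OF C idx_R2[OF ij]] .
    have mc: "Mb A B i j \<in> carrier_mat d d" using Mb_carrier[OF A B ij] .
    show ?thesis
    proof (rule eq_matI)
      fix a b assume ab: "a < dim_row (C (int i - int j))" "b < dim_col (C (int i - int j))"
      hence ab': "a < d" "b < d" using cc by auto
      have lt: "i*d+a < n*d" "j*d+b < n*d" using block_lt ij ab' by auto
      have dm: "(i*d+a) div d = i" "(i*d+a) mod d = a" "(j*d+b) div d = j" "(j*d+b) mod d = b"
        using divmod_block[OF d1 ab'(1)] divmod_block[OF d1 ab'(2)] by auto
      have h0: "(toep n d A * toep n d B) $$ (i*d+a, j*d+b) = toep n d C $$ (i*d+a, j*d+b)" using e by simp
      have h1: "(toep n d A * toep n d B) $$ (i*d+a, j*d+b) = Mb A B i j $$ (a,b)"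
        unfolding toep_mult[OF A B] using lt by (simp only: index_mat(1) split dm)
      have h2: "toep n d C $$ (i*d+a, j*d+b) = C (int i - int j) $$ (a,b)"
        using lt by (simp only: toep_idx dm)
      show "Mb A B i j $$ (a,b) = C (int i - int j) $$ (a,b)"
        using h0 h1 h2 by simp
    qed (use cc mc in auto)
  qed
  show ?thesis
  proof (rule inv_cond[OF _ A B])
    fix i j assume "i+1 < n" "j+1 < n"
    hence e1: "Mb A B (Suc i) (Suc j) = C (int (Suc i) - int (Suc j))" and e2: "Mb A B i j = C (int i - int j)"
      by (intro M; simp)+
    have e3: "C (int (Suc i) - int (Suc j)) = C (int i - int j)" by simp
    show "Mb A B (Suc i) (Suc j) = Mb A B i j" by (simp only: e1 e2 e3)
  qed
qed


definition okW :: "(complex mat \<times> complex mat) set \<Rightarrow> bool" where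
  "okW W \<longleftrightarrow> W \<subseteq> Al \<times> Al \<and> (0\<^sub>m d d, 0\<^sub>m d d) \<in> W
     \<and> (\<forall>w\<in>W. \<forall>w'\<in>W. (fst w + fst w', snd w + snd w') \<in> W)
     \<and> (\<forall>c\<in>Al. \<forall>w\<in>W. (c * fst w, c * snd w) \<in> W)
     \<and> (\<forall>w\<in>W. \<forall>w'\<in>W. fst w * snd w' = snd w * fst w')"

lemma okW_Al: "okW W \<Longrightarrow> (x,y) \<in> W \<Longrightarrow> x \<in> Al \<and> y \<in> Al"
  unfolding okW_def by auto

lemma okW_zero: "okW W \<Longrightarrow> (0\<^sub>m d d, 0\<^sub>m d d) \<in> W"
  unfolding okW_def by auto

lemma okW_add: assumes "okW W" "(x,y) \<in> W" "(x',y') \<in> W" shows "(x + x', y + y') \<in> W"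
proof -
  have "\<forall>w\<in>W. \<forall>w'\<in>W. (fst w + fst w', snd w + snd w') \<in> W" using assms(1) unfolding okW_def by blast
  from this[rule_format, OF assms(2,3)] show ?thesis by simp
qed

lemma okW_mul: assumes "okW W" "c \<in> Al" "(x,y) \<in> W" shows "(c * x, c * y) \<in> W"
proof -
  have "\<forall>c\<in>Al. \<forall>w\<in>W. (c * fst w, c * snd w) \<in> W" using assms(1) unfolding okW_def by blast
  from this[rule_format, OF assms(2,3)] show ?thesis by simp
qed

lemma okW_comp: assumes "okW W" "(x,y) \<in> W" "(x',y') \<in> W" shows "x * y' = y * x'"
proof -
  have "\<forall>w\<in>W. \<forall>w'\<in>W. fst w * snd w' = snd w * fst w'" using assms(1) unfolding okW_def by blast
  from this[rule_format, OF assms(2,3)] show ?thesis by simp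
qed

lemma msum_W: "okW W \<Longrightarrow> (\<And>l. l < k \<Longrightarrow> (f l, g l) \<in> W) \<Longrightarrow> (msum f k, msum g k) \<in> W"
proof (induction k)
  case 0 then show ?case using okW_zero by simp
next
  case (Suc k)
  have "(msum f k, msum g k) \<in> W" using Suc by auto
  moreover have "(f k, g k) \<in> W" using Suc by auto
  ultimately show ?case using okW_add[OF Suc.prems(1)] by simp
qed

lemma msum_reindex:
  fixes f g :: "nat \<Rightarrow> complex mat" and \<phi> \<psi> :: "nat \<Rightarrow> nat"
  assumes fc: "\<And>l. l < k \<Longrightarrow> f l \<in> carrier_mat d d"
    and r1: "\<And>l. l < k \<Longrightarrow> \<phi> l < k" and r2: "\<And>u. u < k \<Longrightarrow> \<psi> u < k"
    and r3: "\<And>l. l < k \<Longrightarrow> \<psi> (\<phi> l) = l" and r4: "\<And>u. u < k \<Longrightarrow> \<phi> (\<psi> u) = u"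
    and eq: "\<And>l. l < k \<Longrightarrow> g (\<phi> l) = f l"
  shows "msum f k = msum g k"
proof -
  have gc: "g u \<in> carrier_mat d d" if u: "u < k" for u
  proof -
    have "g u = g (\<phi> (\<psi> u))" using r4[OF u] by simp
    also have "\<dots> = f (\<psi> u)" using eq[OF r2[OF u]] .
    finally show ?thesis using fc[OF r2[OF u]] by simp
  qed
  show ?thesis
  proof (rule eq_matI)
    fix a b assume ab: "a < dim_row (msum g k)" "b < dim_col (msum g k)"
    hence ab': "a < d" "b < d" using msum_carrier[of k g] gc by auto
    have "(\<Sum>l<k. f l $$ (a,b)) = (\<Sum>u<k. g u $$ (a,b))"
    proof (rule sum.reindex_bij_witness[where i = \<psi> and j = \<phi>])
      fix l assume "l \<in> {..<k}"
      thus "\<psi> (\<phi> l) = l" "\<phi> l \<in> {..<k}" "g (\<phi> l) $$ (a,b) = f l $$ (a,b)"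
        using r1 r3 eq by auto
    next
      fix u assume "u \<in> {..<k}"
      thus "\<phi> (\<psi> u) = u" "\<psi> u \<in> {..<k}" using r2 r4 by auto
    qed
    thus "msum f k $$ (a,b) = msum g k $$ (a,b)"
      using msum_idx[of k f a b, OF fc ab'] msum_idx[of k g a b, OF gc ab'] by simp
  qed (use msum_carrier[of k f, OF fc] msum_carrier[of k g, OF gc] in auto)
qed

lemma prod_W: assumes W: "okW W" and A: "good A" and B: "good B"
  and vA: "\<And>p. p \<in> {1..<n} \<Longrightarrow> (A (int p), A (int p - int n)) \<in> W"
  and vB: "\<And>p. p \<in> {1..<n} \<Longrightarrow> (B (int p), B (int p - int n)) \<in> W"
  and m: "m \<in> {1..<n}"
  shows "(Pm A B (int m), Pm A B (int m - int n)) \<in> W"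
proof -
  define t1 where "t1 = (\<lambda>l. A (int m - int l) * B (int l - int 0))"
  define t2 where "t2 = (\<lambda>l. if l < m then A (int m - int l - int n) * B (int l)
                          else A (int m - int l) * B (int l - int n))"
  define h where "h = (\<lambda>l. A (int 0 - int l) * B (int l - int (n - m)))"
  have P1: "Pm A B (int m) = msum t1 n"
    unfolding Pm_def Mb_def t1_def by simp
  have neg: "\<not> (int m - int n \<ge> 0)" using m by auto
  have "Pm A B (int m - int n) = Mb A B 0 (nat (-(int m - int n)))"
    unfolding Pm_def using neg by (rule if_not_P)
  also have "nat (-(int m - int n)) = n - m" using m by auto
  finally have P2: "Pm A B (int m - int n) = msum h n"
    unfolding Mb_def h_def .
  have mR: "\<And>l. l < n \<Longrightarrow> int m - int l \<in> R" using m by (auto simp: R_def)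
  have T: "msum t2 n = msum h n"
  proof (rule msum_reindex[where \<phi> = "\<lambda>l. if l < m then l + n - m else l - m"
                              and \<psi> = "\<lambda>u. if u < n - m then u + m else u + m - n"])
    fix l assume l: "l < n"
    show "t2 l \<in> carrier_mat d d"
      unfolding t2_def using l m A B by (auto intro!: prod_carrier simp: R_def)
    show "(if l < m then l + n - m else l - m) < n" using l m by auto
    show "(if (if l < m then l + n - m else l - m) < n - m then (if l < m then l + n - m else l - m) + m
          else (if l < m then l + n - m else l - m) + m - n) = l" using l m by auto
    show "h (if l < m then l + n - m else l - m) = t2 l"
    proof (cases "l < m")
      case True
      hence "h (if l < m then l + n - m else l - m) = h (l + n - m)" by simp
      also have "\<dots> = A (int m - int l - int n) * B (int l)"
        unfolding h_def by (rule AB_cong) (use True m in auto)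
      finally show ?thesis unfolding t2_def using True by simp
    next
      case False
      hence "h (if l < m then l + n - m else l - m) = h (l - m)" by simp
      also have "\<dots> = A (int m - int l) * B (int l - int n)"
        unfolding h_def by (rule AB_cong) (use False m in auto)
      finally show ?thesis unfolding t2_def using False by simp
    qed
  next
    fix u assume u: "u < n"
    show "(if u < n - m then u + m else u + m - n) < n" using u m by auto
    show "(if (if u < n - m then u + m else u + m - n) < m then (if u < n - m then u + m else u + m - n) + n - m
          else (if u < n - m then u + m else u + m - n) - m) = u" using u m by auto
  qed
  have each: "(t1 l, t2 l) \<in> W" if l: "l < n" for l
  proof (cases "l < m")
    case True
    have p: "m - l \<in> {1..<n}" using True m by auto
    have c: "B (int l) \<in> Al" using B l unfolding good_def R_def by auto
    have a1: "A (int (m - l)) \<in> Al" "A (int (m - l) - int n) \<in> Al"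
      using okW_Al[OF W vA[OF p]] by auto
    have w: "(B (int l) * A (int (m - l)), B (int l) * A (int (m - l) - int n)) \<in> W"
      by (rule okW_mul[OF W c vA[OF p]])
    have e1: "t1 l = A (int (m - l)) * B (int l)"
      unfolding t1_def by (rule AB_cong) (use True in auto)
    have e2: "t2 l = A (int (m - l) - int n) * B (int l)"
      unfolding t2_def using True by simp
    show ?thesis unfolding e1 e2 Al_comm[OF a1(1) c] Al_comm[OF a1(2) c] by (rule w)
  next
    case False
    have p: "l \<in> {1..<n}" using False m l by auto
    have c: "A (int m - int l) \<in> Al" using A mR[OF l] unfolding good_def by auto
    have w: "(A (int m - int l) * B (int l), A (int m - int l) * B (int l - int n)) \<in> W"
      by (rule okW_mul[OF W c vB[OF p]])
    show ?thesis using w unfolding t1_def t2_def using False by simp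
  qed
  have "(msum t1 n, msum t2 n) \<in> W" by (rule msum_W[OF W each])
  thus ?thesis unfolding P1 P2 T .
qed

definition CW :: "(complex mat \<times> complex mat) set \<Rightarrow> complex mat set" where
  "CW W = {toep n d A | A. good A \<and> (\<forall>p\<in>{1..<n}. (A (int p), A (int p - int n)) \<in> W)}"

lemma CW_iff: "T \<in> CW W \<longleftrightarrow> (\<exists>A. T = toep n d A \<and> good A \<and> (\<forall>p\<in>{1..<n}. (A (int p), A (int p - int n)) \<in> W))"
  unfolding CW_def by blast

lemma smult_one: "X \<in> carrier_mat d d \<Longrightarrow> c \<cdot>\<^sub>m X = (c \<cdot>\<^sub>m 1\<^sub>m d) * (X :: complex mat)"
  by (simp add: mult_smult_assoc_mat[of "1\<^sub>m d" d d X d])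

lemma CW_subalg: assumes W: "okW W" shows "mat_subalg (n*d) (CW W)"
  unfolding mat_subalg_def mat_subspace_def
proof (intro conjI ballI allI)
  show "CW W \<subseteq> carrier_mat (n*d) (n*d)" unfolding CW_def by auto
  show "0\<^sub>m (n*d) (n*d) \<in> CW W" unfolding CW_iff
    by (rule exI[of _ "\<lambda>_. 0\<^sub>m d d"]) (use okW_zero[OF W] Al_zero in \<open>auto simp: toep_zero good_def\<close>)
next
  fix X Y assume X: "X \<in> CW W" and Y: "Y \<in> CW W"
  obtain A where A: "X = toep n d A" "good A" "\<And>p. p\<in>{1..<n} \<Longrightarrow> (A (int p), A (int p - int n)) \<in> W"
    using X unfolding CW_iff by blast
  obtain B where B: "Y = toep n d B" "good B" "\<And>p. p\<in>{1..<n} \<Longrightarrow> (B (int p), B (int p - int n)) \<in> W"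
    using Y unfolding CW_iff by blast
  show "X + Y \<in> CW W" unfolding CW_iff
  proof (intro exI conjI ballI)
    show "X + Y = toep n d (\<lambda>m. A m + B m)" unfolding A(1) B(1) by (rule toep_add[OF A(2) B(2)])
    show "good (\<lambda>m. A m + B m)" using A(2) B(2) unfolding good_def by (auto intro: Al_add)
    fix p assume p: "p \<in> {1..<n}"
    show "(A (int p) + B (int p), A (int p - int n) + B (int p - int n)) \<in> W"
      by (rule okW_add[OF W A(3)[OF p] B(3)[OF p]])
  qed
  have cd: "cond A B" unfolding cond_def
  proof (intro ballI)
    fix p q assume p: "p \<in> {1..<n}" and q: "q \<in> {1..<n}"
    show "A (int p) * B (int q - int n) = A (int p - int n) * B (int q)"
      by (rule okW_comp[OF W A(3)[OF p] B(3)[OF q]])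
  qed
  show "X * Y \<in> CW W" unfolding CW_iff
  proof (intro exI conjI ballI)
    show "X * Y = toep n d (Pm A B)" unfolding A(1) B(1) by (rule toep_prod[OF cd A(2) B(2)])
    show "good (Pm A B)" by (rule Pm_good[OF A(2) B(2)])
    fix p assume p: "p \<in> {1..<n}"
    show "(Pm A B (int p), Pm A B (int p - int n)) \<in> W"
      by (rule prod_W[OF W A(2) B(2) A(3) B(3) p])
  qed
next
  fix c X assume X: "X \<in> CW W"
  obtain A where A: "X = toep n d A" "good A" "\<And>p. p\<in>{1..<n} \<Longrightarrow> (A (int p), A (int p - int n)) \<in> W"
    using X unfolding CW_iff by blast
  have c1: "c \<cdot>\<^sub>m 1\<^sub>m d \<in> Al" by (rule Al_smult[OF one])
  show "c \<cdot>\<^sub>m X \<in> CW W" unfolding CW_iff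
  proof (intro exI conjI ballI)
    show "c \<cdot>\<^sub>m X = toep n d (\<lambda>m. c \<cdot>\<^sub>m A m)" unfolding A(1) by (rule toep_smult[OF A(2)])
    show "good (\<lambda>m. c \<cdot>\<^sub>m A m)" using A(2) unfolding good_def by (auto intro: Al_smult)
    fix p assume p: "p \<in> {1..<n}"
    have "(c \<cdot>\<^sub>m 1\<^sub>m d * A (int p), c \<cdot>\<^sub>m 1\<^sub>m d * A (int p - int n)) \<in> W"
      by (rule okW_mul[OF W c1 A(3)[OF p]])
    moreover have ca: "A (int p) \<in> carrier_mat d d" and cb: "A (int p - int n) \<in> carrier_mat d d"
      using okW_Al[OF W A(3)[OF p]] Al_carrier by auto
    moreover have "c \<cdot>\<^sub>m A (int p) = c \<cdot>\<^sub>m 1\<^sub>m d * A (int p)" using ca by (rule smult_one)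
    moreover have "c \<cdot>\<^sub>m A (int p - int n) = c \<cdot>\<^sub>m 1\<^sub>m d * A (int p - int n)" using cb by (rule smult_one)
    ultimately show "(c \<cdot>\<^sub>m A (int p), c \<cdot>\<^sub>m A (int p - int n)) \<in> W"
      by (simp only:)
  qed
qed


inductive_set Wgen :: "(complex mat \<times> complex mat) set \<Rightarrow> (complex mat \<times> complex mat) set"
  for V :: "(complex mat \<times> complex mat) set" where
  base: "v \<in> V \<Longrightarrow> v \<in> Wgen V"
| zero: "(0\<^sub>m d d, 0\<^sub>m d d) \<in> Wgen V"
| add: "w \<in> Wgen V \<Longrightarrow> w' \<in> Wgen V \<Longrightarrow> (fst w + fst w', snd w + snd w') \<in> Wgen V"
| mul: "c \<in> Al \<Longrightarrow> w \<in> Wgen V \<Longrightarrow> (c * fst w, c * snd w) \<in> Wgen V"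

lemma Wgen_Al: assumes V: "V \<subseteq> Al \<times> Al" shows "w \<in> Wgen V \<Longrightarrow> w \<in> Al \<times> Al"
proof (induction rule: Wgen.induct)
  case (base v) then show ?case using V by auto
next
  case zero then show ?case using Al_zero by auto
next
  case (add w w') then show ?case using Al_add by (auto simp: mem_Times_iff)
next
  case (mul c w) then show ?case using Al_mult by (auto simp: mem_Times_iff)
qed

definition cmpt :: "complex mat \<times> complex mat \<Rightarrow> complex mat \<times> complex mat \<Rightarrow> bool" where
  "cmpt w w' \<longleftrightarrow> fst w * snd w' = snd w * fst w'"

lemma comp_sym: assumes "w \<in> Al \<times> Al" "w' \<in> Al \<times> Al" "cmpt w w'" shows "cmpt w' w"
proof -
  obtain x y x' y' where w: "w = (x,y)" "w' = (x',y')" by (cases w, cases w') auto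
  have a: "x \<in> Al" "y \<in> Al" "x' \<in> Al" "y' \<in> Al" using assms(1,2) w by auto
  have "x' * y = y * x'" by (rule Al_comm[OF a(3) a(2)])
  also have "\<dots> = x * y'" using assms(3) w by (simp add: cmpt_def)
  also have "\<dots> = y' * x" by (rule Al_comm[OF a(1) a(4)])
  finally show ?thesis unfolding cmpt_def w by simp
qed

lemma comp_Wgen: assumes u: "u \<in> Al \<times> Al" and V: "V \<subseteq> Al \<times> Al" and uv: "\<And>v. v \<in> V \<Longrightarrow> cmpt u v"
  shows "w \<in> Wgen V \<Longrightarrow> cmpt u w"
proof (induction rule: Wgen.induct)
  case (base v) then show ?case by (rule uv)
next
  case zero
  have c: "fst u \<in> carrier_mat d d" "snd u \<in> carrier_mat d d" using u Al_carrier by auto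
  have z1: "fst u * 0\<^sub>m d d = 0\<^sub>m d d" by (rule right_mult_zero_mat[OF c(1)])
  have z2: "snd u * 0\<^sub>m d d = 0\<^sub>m d d" by (rule right_mult_zero_mat[OF c(2)])
  show ?case unfolding cmpt_def fst_conv snd_conv z1 z2 ..
next
  case (add w w')
  have x: "fst u \<in> carrier_mat d d" "snd u \<in> carrier_mat d d" using u Al_carrier by auto
  have ww: "w \<in> Al \<times> Al" "w' \<in> Al \<times> Al" using Wgen_Al[OF V] add by auto
  have c: "fst w \<in> carrier_mat d d" "snd w \<in> carrier_mat d d" "fst w' \<in> carrier_mat d d" "snd w' \<in> carrier_mat d d"
    using ww Al_carrier by auto
  have "fst u * (snd w + snd w') = fst u * snd w + fst u * snd w'"
    using x c by (intro mult_add_distrib_mat) auto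
  also have "\<dots> = snd u * fst w + snd u * fst w'" using add.IH unfolding cmpt_def by simp
  also have "\<dots> = snd u * (fst w + fst w')"
    using x c by (intro mult_add_distrib_mat[symmetric]) auto
  finally show ?case unfolding cmpt_def by simp
next
  case (mul c w)
  have a: "fst u \<in> Al" "snd u \<in> Al" using u by auto
  have ww: "w \<in> Al \<times> Al" using Wgen_Al[OF V] mul by auto
  have b: "fst w \<in> Al" "snd w \<in> Al" using ww by auto
  have cc: "c \<in> carrier_mat d d" using mul Al_carrier by auto
  have car: "fst u \<in> carrier_mat d d" "snd u \<in> carrier_mat d d" "fst w \<in> carrier_mat d d" "snd w \<in> carrier_mat d d"
    using a b Al_carrier by auto
  have "fst u * (c * snd w) = (fst u * c) * snd w" using car cc by simp
  also have "\<dots> = (c * fst u) * snd w" using Al_comm[OF a(1) mul(1)] by simp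
  also have "\<dots> = c * (fst u * snd w)" using car cc by simp
  also have "\<dots> = c * (snd u * fst w)" using mul.IH unfolding cmpt_def by simp
  also have "\<dots> = (c * snd u) * fst w" using car cc by simp
  also have "\<dots> = (snd u * c) * fst w" using Al_comm[OF a(2) mul(1)] by simp
  also have "\<dots> = snd u * (c * fst w)" using car cc by simp
  finally show ?case unfolding cmpt_def by simp
qed

lemma Wgen_comp: assumes V: "V \<subseteq> Al \<times> Al" and VV: "\<And>v v'. v \<in> V \<Longrightarrow> v' \<in> V \<Longrightarrow> cmpt v v'"
  and w: "w \<in> Wgen V" and w': "w' \<in> Wgen V"
  shows "cmpt w w'"
proof -
  have s1: "cmpt v w'" if v: "v \<in> V" and w': "w' \<in> Wgen V" for v w'
    using comp_Wgen[of v V w'] V v VV w' by auto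
  have wA: "w \<in> Al \<times> Al" using Wgen_Al[OF V w] .
  have "cmpt w v" if v: "v \<in> V" for v
    using comp_sym[of v w] s1[OF v w] wA V v by auto
  thus ?thesis using comp_Wgen[of w V w'] wA V w' by auto
qed

lemma okW_Wgen: assumes V: "V \<subseteq> Al \<times> Al" and VV: "\<And>v v'. v \<in> V \<Longrightarrow> v' \<in> V \<Longrightarrow> cmpt v v'"
  shows "okW (Wgen V)"
  unfolding okW_def
proof (intro conjI ballI)
  show "Wgen V \<subseteq> Al \<times> Al" using Wgen_Al[OF V] by auto
  show "(0\<^sub>m d d, 0\<^sub>m d d) \<in> Wgen V" by (rule Wgen.zero)
  fix w w' assume "w \<in> Wgen V" "w' \<in> Wgen V"
  thus "(fst w + fst w', snd w + snd w') \<in> Wgen V" by (rule Wgen.add)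
  have "cmpt w w'" using V VV \<open>w \<in> Wgen V\<close> \<open>w' \<in> Wgen V\<close> by (rule Wgen_comp)
  thus "fst w * snd w' = snd w * fst w'" by (simp add: cmpt_def)
next
  fix c w assume "c \<in> Al" "w \<in> Wgen V"
  thus "(c * fst w, c * snd w) \<in> Wgen V" by (rule Wgen.mul)
qed

lemma E_idx: "r < n*d \<Longrightarrow> c < n*d \<Longrightarrow> E_op n d k T $$ (r,c) =
   (if int (r div d) - int (c div d) = int k \<or> int (r div d) - int (c div d) = int k - int n
    then T $$ (r,c) else 0)"
  unfolding E_op_def by simp

lemma E_toep: "E_op n d k (toep n d A) =
   toep n d (\<lambda>m. if m = int k \<or> m = int k - int n then A m else 0\<^sub>m d d)"
proof (rule eq_matI)
  fix r c assume rc: "r < dim_row (toep n d (\<lambda>m. if m = int k \<or> m = int k - int n then A m else 0\<^sub>m d d))"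
    "c < dim_col (toep n d (\<lambda>m. if m = int k \<or> m = int k - int n then A m else 0\<^sub>m d d))"
  hence rc': "r < n*d" "c < n*d" by auto
  show "E_op n d k (toep n d A) $$ (r,c) = toep n d (\<lambda>m. if m = int k \<or> m = int k - int n then A m else 0\<^sub>m d d) $$ (r,c)"
    using rc' by (cases "int (r div d) - int (c div d) = int k \<or> int (r div d) - int (c div d) = int k - int n")
       (simp_all add: E_idx toep_idx mod_lt)
qed (simp_all add: E_op_def)


lemma nonzero_entry: fixes X :: "complex mat"
  assumes "X \<in> carrier_mat d d" "X \<noteq> 0\<^sub>m d d" shows "\<exists>a b. a < d \<and> b < d \<and> X $$ (a,b) \<noteq> 0"
proof (rule ccontr)
  assume "\<not> ?thesis"
  hence "X = 0\<^sub>m d d" using assms(1) by (intro eq_matI) auto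
  thus False using assms(2) by simp
qed

theorem main:
  assumes maxB: "maximal_subalg_in (n*d) (toeplitz_set n d Al) Bc"
  shows "diag_toeplitz_set n d Al \<subseteq> Bc
    \<and> (\<forall>A\<in>Bc. \<forall>k<n. E_op n d k A \<in> Bc)
    \<and> Bc = mat_span (n*d) (\<Union>k<n. E_op n d k ` Bc)
    \<and> (\<forall>\<sigma>. \<sigma> permutes {1..n-1} \<longrightarrow> (\<forall>A\<in>Bc. perm_act n d \<sigma> A \<in> Bc))
    \<and> (\<forall>k<n. E_op n d k ` Bc \<noteq> {0\<^sub>m (n*d) (n*d)})"
proof -
  have Bsub: "mat_subalg (n*d) Bc" and BT: "Bc \<subseteq> toeplitz_set n d Al"
   and Bmax: "\<And>S'. mat_subalg (n*d) S' \<Longrightarrow> Bc \<subseteq> S' \<Longrightarrow> S' \<subseteq> toeplitz_set n d Al \<Longrightarrow> S' = Bc"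
    using maxB unfolding maximal_subalg_in_def by auto
  have Tiff: "T \<in> toeplitz_set n d Al \<longleftrightarrow> (\<exists>A. T = toep n d A \<and> good A)" for T
    unfolding toeplitz_set_def good_def R_def by blast
  have CWT: "CW W \<subseteq> toeplitz_set n d Al" for W
  proof
    fix T assume "T \<in> CW W"
    thus "T \<in> toeplitz_set n d Al" unfolding CW_iff Tiff by blast
  qed
  have Bmul: "\<And>X Y. X \<in> Bc \<Longrightarrow> Y \<in> Bc \<Longrightarrow> X * Y \<in> Bc" and Bsp: "mat_subspace (n*d) Bc"
    using Bsub unfolding mat_subalg_def by auto
  have getA: "\<exists>A. T = toep n d A \<and> good A" if "T \<in> Bc" for T
  proof -
    have "T \<in> toeplitz_set n d Al" using that BT by blast
    thus ?thesis unfolding Tiff .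
  qed
  define V where "V = {(A (int p), A (int p - int n)) | A p. toep n d A \<in> Bc \<and> good A \<and> p \<in> {1..<n}}"
  have Viff: "v \<in> V \<longleftrightarrow> (\<exists>A p. v = (A (int p), A (int p - int n)) \<and> toep n d A \<in> Bc \<and> good A \<and> p \<in> {1..<n})" for v
    unfolding V_def by blast
  have VAl: "V \<subseteq> Al \<times> Al"
  proof
    fix v assume "v \<in> V"
    then obtain A p where "v = (A (int p), A (int p - int n))" "good A" "p \<in> {1..<n}" unfolding Viff by blast
    thus "v \<in> Al \<times> Al" unfolding good_def R_def by auto
  qed
  have VV: "cmpt v v'" if v1: "v \<in> V" and v2: "v' \<in> V" for v v'
  proof -
    obtain A p where A: "v = (A (int p), A (int p - int n))" "toep n d A \<in> Bc" "good A" "p \<in> {1..<n}"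
      using v1 unfolding Viff by blast
    obtain B q where B: "v' = (B (int q), B (int q - int n))" "toep n d B \<in> Bc" "good B" "q \<in> {1..<n}"
      using v2 unfolding Viff by blast
    have "toep n d A * toep n d B \<in> toeplitz_set n d Al" using Bmul[OF A(2) B(2)] BT by blast
    then obtain C where C: "toep n d A * toep n d B = toep n d C" "good C" unfolding Tiff by blast
    have "cond A B" by (rule prod_cond[OF A(3) B(3) C(2) C(1)])
    hence "A (int p) * B (int q - int n) = A (int p - int n) * B (int q)"
      using A(4) B(4) unfolding cond_def by blast
    thus ?thesis unfolding cmpt_def A(1) B(1) by simp
  qed
  define W where "W = Wgen V"
  have okW: "okW W" unfolding W_def by (rule okW_Wgen[OF VAl VV])
  have inV: "(A (int p), A (int p - int n)) \<in> W" if "toep n d A \<in> Bc" "good A" "p \<in> {1..<n}" for A p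
  proof -
    have "(A (int p), A (int p - int n)) \<in> V" unfolding Viff using that by blast
    thus ?thesis unfolding W_def by (rule Wgen.base)
  qed
  have BCW: "Bc \<subseteq> CW W"
  proof
    fix T assume T: "T \<in> Bc"
    obtain A where A: "T = toep n d A" "good A" using getA[OF T] by blast
    have TB: "toep n d A \<in> Bc" using T A(1) by simp
    show "T \<in> CW W" unfolding CW_iff
      using A inV[OF TB A(2)] by blast
  qed
  have Beq: "CW W = Bc" by (rule Bmax[OF CW_subalg[OF okW] BCW CWT])
  have memB: "toep n d A \<in> Bc" if "good A" "\<And>p. p \<in> {1..<n} \<Longrightarrow> (A (int p), A (int p - int n)) \<in> W" for A
  proof -
    have "toep n d A \<in> CW W" unfolding CW_iff using that by blast
    thus ?thesis using Beq by simp
  qed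
  have W0: "(0\<^sub>m d d, 0\<^sub>m d d) \<in> W" using okW_zero[OF okW] .
  have dpos: "0 < d" using d1 by simp

  have part1: "diag_toeplitz_set n d Al \<subseteq> Bc"
  proof
    fix T assume "T \<in> diag_toeplitz_set n d Al"
    then obtain A where A: "T = toep n d A" "good A" "\<And>m. m \<in> R \<Longrightarrow> m \<noteq> 0 \<Longrightarrow> A m = 0\<^sub>m d d"
      unfolding diag_toeplitz_set_def good_def R_def by blast
    have "toep n d A \<in> Bc"
    proof (rule memB[OF A(2)])
      fix p assume p: "p \<in> {1..<n}"
      have "A (int p) = 0\<^sub>m d d" "A (int p - int n) = 0\<^sub>m d d" using A(3) p by (auto simp: R_def)
      thus "(A (int p), A (int p - int n)) \<in> W" using W0 by simp
    qed
    thus "T \<in> Bc" using A(1) by simp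
  qed

  have Ek_good: "good (\<lambda>m. if m = int k \<or> m = int k - int n then A m else 0\<^sub>m d d)" if "good A" for A k
    using that Al_zero unfolding good_def by auto
  have part2: "E_op n d k T \<in> Bc" if T: "T \<in> Bc" and k: "k < n" for T k
  proof -
    obtain A where A: "T = toep n d A" "good A" using getA[OF T] by blast
    have TB: "toep n d A \<in> Bc" using T A(1) by simp
    define Ek where "Ek = (\<lambda>m. if m = int k \<or> m = int k - int n then A m else 0\<^sub>m d d)"
    have "toep n d Ek \<in> Bc"
    proof (rule memB)
      show "good Ek" unfolding Ek_def by (rule Ek_good[OF A(2)])
      fix p assume p: "p \<in> {1..<n}"
      show "(Ek (int p), Ek (int p - int n)) \<in> W"
      proof (cases "p = k")
        case True
        thus ?thesis using inV[OF TB A(2) p] unfolding Ek_def by simp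
      next
        case False
        have "int p \<noteq> int k" "int p \<noteq> int k - int n" "int p - int n \<noteq> int k" "int p - int n \<noteq> int k - int n"
          using False p k by auto
        thus ?thesis using W0 unfolding Ek_def by simp
      qed
    qed
    thus ?thesis unfolding A(1) E_toep Ek_def .
  qed

  have part3: "Bc = mat_span (n*d) (\<Union>k<n. E_op n d k ` Bc)"
  proof
    show "mat_span (n*d) (\<Union>k<n. E_op n d k ` Bc) \<subseteq> Bc"
      unfolding mat_span_def using Bsp part2 by (intro Inter_lower) auto
  next
    show "Bc \<subseteq> mat_span (n*d) (\<Union>k<n. E_op n d k ` Bc)"
    proof
      fix T assume T: "T \<in> Bc"
      obtain A where A: "T = toep n d A" "good A" using getA[OF T] by blast
      show "T \<in> mat_span (n*d) (\<Union>k<n. E_op n d k ` Bc)" unfolding mat_span_def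
      proof (rule InterI)
        fix S assume "S \<in> {S. mat_subspace (n*d) S \<and> (\<Union>k<n. E_op n d k ` Bc) \<subseteq> S}"
        hence S: "mat_subspace (n*d) S" "\<And>k. k < n \<Longrightarrow> E_op n d k T \<in> S" using T by auto
        have S0: "0\<^sub>m (n*d) (n*d) \<in> S" and Sadd: "\<And>X Y. X \<in> S \<Longrightarrow> Y \<in> S \<Longrightarrow> X + Y \<in> S"
          using S(1) unfolding mat_subspace_def by auto
        define G where "G j = (\<lambda>m. if (\<exists>k<j. m = int k \<or> m = int k - int n) then A m else 0\<^sub>m d d)" for j
        have Gg: "good (G j)" for j using A(2) Al_zero unfolding good_def G_def by auto
        have GS: "toep n d (G j) \<in> S" if "j \<le> n" for j
          using that
        proof (induction j)
          case 0
          have "toep n d (G 0) = toep n d (\<lambda>_. 0\<^sub>m d d)" by (rule toep_cong) (simp add: G_def)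
          thus ?case using S0 toep_zero by simp
        next
          case (Suc j)
          have j: "j < n" using Suc by auto
          have IH: "toep n d (G j) \<in> S" using Suc.IH j by simp
          have Ej: "E_op n d j T = toep n d (\<lambda>m. if m = int j \<or> m = int j - int n then A m else 0\<^sub>m d d)"
            unfolding A(1) by (rule E_toep)
          have "toep n d (G j) + E_op n d j T
              = toep n d (\<lambda>m. G j m + (if m = int j \<or> m = int j - int n then A m else 0\<^sub>m d d))"
            unfolding Ej by (rule toep_add[OF Gg Ek_good[OF A(2)]])
          also have "\<dots> = toep n d (G (Suc j))"
          proof (rule toep_cong)
            fix m assume m: "m \<in> R"
            have Am: "A m \<in> carrier_mat d d" using good_carrier[OF A(2) m] .
            show "G j m + (if m = int j \<or> m = int j - int n then A m else 0\<^sub>m d d) = G (Suc j) m"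
            proof (cases "m = int j \<or> m = int j - int n")
              case True
              have "\<not> (\<exists>k<j. m = int k \<or> m = int k - int n)" using True j by auto
              hence "G j m = 0\<^sub>m d d" unfolding G_def by auto
              moreover have "G (Suc j) m = A m" unfolding G_def using True by auto
              ultimately show ?thesis using True Am by simp
            next
              case False
              have "(\<exists>k<Suc j. m = int k \<or> m = int k - int n) \<longleftrightarrow> (\<exists>k<j. m = int k \<or> m = int k - int n)"
                using False less_Suc_eq by auto
              hence "G (Suc j) m = G j m" unfolding G_def by simp
              moreover have "G j m \<in> carrier_mat d d" using good_carrier[OF Gg m] .
              ultimately show ?thesis using False by simp
            qed
          qed
          finally have "toep n d (G (Suc j)) = toep n d (G j) + E_op n d j T" by simp
          thus ?case using Sadd[OF IH S(2)[OF j]] by simp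
        qed
        have "toep n d (G n) = T"
          unfolding A(1)
        proof (rule toep_cong)
          fix m assume m: "m \<in> R"
          have "\<exists>k<n. m = int k \<or> m = int k - int n"
          proof (cases "m \<ge> 0")
            case True thus ?thesis using m by (intro exI[of _ "nat m"]) (auto simp: R_def)
          next
            case False thus ?thesis using m by (intro exI[of _ "nat (m + int n)"]) (auto simp: R_def)
          qed
          thus "G n m = A m" unfolding G_def by simp
        qed
        thus "T \<in> S" using GS[of n] by simp
      qed
    qed
  qed

  have part4: "perm_act n d \<sigma> T \<in> Bc" if \<sigma>: "\<sigma> permutes {1..n-1}" and T: "T \<in> Bc" for \<sigma> T
  proof -
    obtain A where A: "T = toep n d A" "good A" using getA[OF T] by blast
    have TB: "toep n d A \<in> Bc" using T A(1) by simp
    define \<tau> where "\<tau> = inv_into UNIV \<sigma>"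
    have \<tau>p: "\<tau> permutes {1..n-1}" unfolding \<tau>_def using permutes_inv[OF \<sigma>] by simp
    have \<tau>in: "\<tau> p \<in> {1..<n}" if "p \<in> {1..<n}" for p
    proof -
      have "p \<in> {1..n-1}" using that by auto
      hence "\<tau> p \<in> {1..n-1}" using permutes_in_image[OF \<tau>p] by simp
      thus ?thesis using n2 by auto
    qed
    have symb: "toep_symbol d T x = A x" if "x \<in> R" for x
      unfolding A(1) by (rule toep_symbol_toep[of x A, OF that good_carrier[OF A(2) that]])
    define A' where "A' = (\<lambda>m. if m = 0 then toep_symbol d T 0
      else if m > 0 then toep_symbol d T (int (\<tau> (nat m)))
      else toep_symbol d T (int (\<tau> (nat (m + int n))) - int n))"
    have pa: "perm_act n d \<sigma> T = toep n d A'" unfolding perm_act_def A'_def \<tau>_def ..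
    have A'pos: "A' (int p) = A (int (\<tau> p))" if "p \<in> {1..<n}" for p
    proof -
      have "int (\<tau> p) \<in> R" using \<tau>in[OF that] by (auto simp: R_def)
      thus ?thesis using that unfolding A'_def by (simp add: symb)
    qed
    have A'neg: "A' (int p - int n) = A (int (\<tau> p) - int n)" if "p \<in> {1..<n}" for p
    proof -
      have "int (\<tau> p) - int n \<in> R" using \<tau>in[OF that] by (auto simp: R_def)
      thus ?thesis using that unfolding A'_def by (simp add: symb)
    qed
    have gA': "good A'"
      unfolding good_def
    proof
      fix m assume m: "m \<in> R"
      show "A' m \<in> Al"
      proof (cases "m = 0")
        case True
        have "(0::int) \<in> R" unfolding R_def using n2 by auto
        thus ?thesis using True symb[of 0] A(2) unfolding A'_def good_def by auto
      next
        case False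
        show ?thesis
        proof (cases "m > 0")
          case True
          define p where "p = nat m"
          have p: "p \<in> {1..<n}" "m = int p" using m True unfolding p_def R_def by auto
          show ?thesis using A'pos[OF p(1)] \<tau>in[OF p(1)] A(2) p(2) unfolding good_def R_def by auto
        next
          case neg: False
          define p where "p = nat (m + int n)"
          have p: "p \<in> {1..<n}" "m = int p - int n" using m neg False unfolding p_def R_def by auto
          show ?thesis using A'neg[OF p(1)] \<tau>in[OF p(1)] A(2) p(2) unfolding good_def R_def by auto
        qed
      qed
    qed
    have "toep n d A' \<in> Bc"
    proof (rule memB[OF gA'])
      fix p assume p: "p \<in> {1..<n}"
      show "(A' (int p), A' (int p - int n)) \<in> W"
        unfolding A'pos[OF p] A'neg[OF p] by (rule inV[OF TB A(2) \<tau>in[OF p]])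
    qed
    thus ?thesis unfolding pa .
  qed

  have Wnz: "\<exists>w\<in>W. w \<noteq> (0\<^sub>m d d, 0\<^sub>m d d)"
  proof (rule ccontr)
    assume "\<not> ?thesis"
    hence allz: "\<And>w. w \<in> W \<Longrightarrow> w = (0\<^sub>m d d, 0\<^sub>m d d)" by blast
    define W' :: "(complex mat \<times> complex mat) set" where "W' = {(x, 0\<^sub>m d d) | x. x \<in> Al}"
    have W'iff: "w \<in> W' \<longleftrightarrow> (fst w \<in> Al \<and> snd w = 0\<^sub>m d d)" for w unfolding W'_def by (cases w) auto
    have okW': "okW W'"
      unfolding okW_def
    proof (intro conjI ballI)
      show "W' \<subseteq> Al \<times> Al"
      proof
        fix w assume "w \<in> W'" thus "w \<in> Al \<times> Al" using Al_zero unfolding W'iff by (cases w) auto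
      qed
      show "(0\<^sub>m d d, 0\<^sub>m d d) \<in> W'" unfolding W'iff using Al_zero by simp
      fix w w' assume w: "w \<in> W'" and w': "w' \<in> W'"
      have c: "fst w \<in> carrier_mat d d" "fst w' \<in> carrier_mat d d" using w w' Al_carrier unfolding W'iff by auto
      show "(fst w + fst w', snd w + snd w') \<in> W'" using w w' Al_add unfolding W'iff by auto
      have z: "fst w * 0\<^sub>m d d = 0\<^sub>m d d" "0\<^sub>m d d * fst w' = 0\<^sub>m d d"
        using right_mult_zero_mat[OF c(1)] left_mult_zero_mat[OF c(2)] by auto
      show "fst w * snd w' = snd w * fst w'" using w w' z unfolding W'iff by simp
    next
      fix c w assume c: "c \<in> Al" and w: "w \<in> W'"
      have "c * 0\<^sub>m d d = 0\<^sub>m d d" using right_mult_zero_mat[OF Al_carrier[OF c]] .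
      thus "(c * fst w, c * snd w) \<in> W'" using c w Al_mult unfolding W'iff by auto
    qed
    have "Bc \<subseteq> CW W'"
    proof
      fix T assume "T \<in> Bc"
      hence "T \<in> CW W" using Beq by simp
      then obtain A where A: "T = toep n d A" "good A" "\<And>p. p \<in> {1..<n} \<Longrightarrow> (A (int p), A (int p - int n)) \<in> W"
        unfolding CW_iff by blast
      have "(A (int p), A (int p - int n)) \<in> W'" if p: "p \<in> {1..<n}" for p
        using allz[OF A(3)[OF p]] Al_zero unfolding W'iff by simp
      thus "T \<in> CW W'" unfolding CW_iff using A(1,2) by blast
    qed
    hence Beq': "CW W' = Bc" by (intro Bmax[OF CW_subalg[OF okW']] CWT)
    define A1 :: "int \<Rightarrow> complex mat" where "A1 = (\<lambda>m::int. if m = 1 then 1\<^sub>m d else 0\<^sub>m d d)"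
    have gA1: "good A1" using one Al_zero unfolding good_def A1_def by auto
    have "(A1 (int p), A1 (int p - int n)) \<in> W'" if p: "p \<in> {1..<n}" for p
    proof -
      have "int p - int n \<noteq> 1" using p by auto
      thus ?thesis unfolding W'iff A1_def using one Al_zero by auto
    qed
    hence "toep n d A1 \<in> CW W'" unfolding CW_iff using gA1 by blast
    hence "toep n d A1 \<in> Bc" using Beq' by simp
    moreover have "1 \<in> {1..<n}" using n2 by auto
    ultimately have "(A1 (int 1), A1 (int 1 - int n)) \<in> W" by (rule inV[OF _ gA1])
    hence "A1 (int 1) = 0\<^sub>m d d" using allz by blast
    hence "(1\<^sub>m d :: complex mat) = 0\<^sub>m d d" unfolding A1_def by simp
    hence "(1\<^sub>m d :: complex mat) $$ (0,0) = 0\<^sub>m d d $$ (0,0)" by simp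
    thus False using dpos by simp
  qed
  then obtain w where w: "w \<in> W" "w \<noteq> (0\<^sub>m d d, 0\<^sub>m d d)" by blast
  have wAl: "fst w \<in> Al" "snd w \<in> Al" using okW_Al[OF okW, of "fst w" "snd w"] w(1) by auto

  have part5: "E_op n d k ` Bc \<noteq> {0\<^sub>m (n*d) (n*d)}" if k: "k < n" for k
  proof -
    have nd: "0 < n*d" using n2 d1 by simp
    obtain X where XB: "X \<in> Bc" and Xne: "E_op n d k X \<noteq> 0\<^sub>m (n*d) (n*d)"
    proof (cases "k = 0")
      case True
      define I :: "int \<Rightarrow> complex mat" where "I = (\<lambda>m::int. if m = 0 then 1\<^sub>m d else 0\<^sub>m d d)"
      have "toep n d I \<in> diag_toeplitz_set n d Al"
        unfolding diag_toeplitz_set_def I_def using one Al_zero by auto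
      hence IB: "toep n d I \<in> Bc" using part1 by auto
      have "E_op n d k (toep n d I) $$ (0,0) = 1"
        using nd True dpos by (simp add: E_idx toep_idx I_def)
      hence "E_op n d k (toep n d I) \<noteq> 0\<^sub>m (n*d) (n*d)" using nd by auto
      thus ?thesis using IB that by blast
    next
      case False
      define Aw where "Aw = (\<lambda>m. if m = int k then fst w else if m = int k - int n then snd w else 0\<^sub>m d d)"
      have kn: "int k - int n \<noteq> int k" using n2 by auto
      have gAw: "good Aw" using wAl Al_zero unfolding good_def Aw_def by auto
      have TB: "toep n d Aw \<in> Bc"
      proof (rule memB[OF gAw])
        fix p assume p: "p \<in> {1..<n}"
        show "(Aw (int p), Aw (int p - int n)) \<in> W"
        proof (cases "p = k")
          case True
          thus ?thesis using w(1) kn unfolding Aw_def by simp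
        next
          case False
          have "int p \<noteq> int k" "int p \<noteq> int k - int n" "int p - int n \<noteq> int k" "int p - int n \<noteq> int k - int n"
            using False p k by auto
          thus ?thesis using W0 unfolding Aw_def by simp
        qed
      qed
      have ne: "E_op n d k (toep n d Aw) \<noteq> 0\<^sub>m (n*d) (n*d)"
      proof (cases "fst w = 0\<^sub>m d d")
        case False
        obtain a b where ab: "a < d" "b < d" "fst w $$ (a,b) \<noteq> 0"
          using nonzero_entry[OF Al_carrier[OF wAl(1)] False] by blast
        have "b < n*d" using ab(2) n2 by (metis less_le_trans mult_le_mono1 mult_1 one_le_numeral le_trans Suc_1 le_add1 plus_1_eq_Suc)
        hence lt: "k*d + a < n*d" "b < n*d" using block_lt[OF k ab(1)] by auto
        have ix: "int ((k*d+a) div d) - int (b div d) = int k" using divmod_block[OF d1 ab(1)] ab(2) by simp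
        have md: "(k*d+a) mod d = a" "b mod d = b" using divmod_block[OF d1 ab(1)] ab(2) by auto
        have "E_op n d k (toep n d Aw) $$ (k*d+a, b) = Aw (int k) $$ (a,b)"
          unfolding E_idx[OF lt] toep_idx[OF lt] ix md by simp
        also have "\<dots> = fst w $$ (a,b)" unfolding Aw_def by simp
        finally show ?thesis using ab(3) lt by auto
      next
        case True
        hence sn: "snd w \<noteq> 0\<^sub>m d d" using w(2) by (cases w) auto
        obtain a b where ab: "a < d" "b < d" "snd w $$ (a,b) \<noteq> 0"
          using nonzero_entry[OF Al_carrier[OF wAl(2)] sn] by blast
        have nk: "n - k < n" using False k by auto
        have "a < n*d" using ab(1) n2 by (metis less_le_trans mult_le_mono1 mult_1 one_le_numeral le_trans Suc_1 le_add1 plus_1_eq_Suc)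
        hence lt: "a < n*d" "(n-k)*d + b < n*d" using block_lt[OF nk ab(2)] by auto
        have ix: "int (a div d) - int (((n-k)*d+b) div d) = int k - int n"
          using divmod_block[OF d1 ab(2)] ab(1) k by simp
        have md: "a mod d = a" "((n-k)*d+b) mod d = b" using divmod_block[OF d1 ab(2)] ab(1) by auto
        have "E_op n d k (toep n d Aw) $$ (a, (n-k)*d+b) = Aw (int k - int n) $$ (a,b)"
          unfolding E_idx[OF lt] toep_idx[OF lt] ix md by simp
        also have "\<dots> = snd w $$ (a,b)" unfolding Aw_def using kn by simp
        finally show ?thesis using ab(3) lt by auto
      qed
      thus ?thesis using TB that by blast
    qed
    show ?thesis
    proof
      assume eq: "E_op n d k ` Bc = {0\<^sub>m (n*d) (n*d)}"
      have "E_op n d k X \<in> E_op n d k ` Bc" using XB by blast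
      thus False using eq Xne by auto
    qed
  qed
  show ?thesis using part1 part2 part3 part4 part5 by blast
qed

end

lemma max_comm_one: assumes M: "maximal_comm_subalg d S" shows "1\<^sub>m d \<in> S"
proof -
  have cs: "comm_mat_subalg d S" and mx: "\<And>S'. comm_mat_subalg d S' \<Longrightarrow> S \<subseteq> S' \<Longrightarrow> S' = S"
    using M unfolding maximal_comm_subalg_def by auto
  have Sc: "\<And>X. X \<in> S \<Longrightarrow> X \<in> carrier_mat d d"
   and S0: "0\<^sub>m d d \<in> S"
   and Sadd: "\<And>X Y. X \<in> S \<Longrightarrow> Y \<in> S \<Longrightarrow> X + Y \<in> S"
   and Ssm: "\<And>c X. X \<in> S \<Longrightarrow> c \<cdot>\<^sub>m X \<in> S"
   and Smul: "\<And>X Y. X \<in> S \<Longrightarrow> Y \<in> S \<Longrightarrow> X * Y \<in> S"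
   and Scomm: "\<And>X Y. X \<in> S \<Longrightarrow> Y \<in> S \<Longrightarrow> X * Y = Y * X"
    using cs unfolding comm_mat_subalg_def mat_subalg_def mat_subspace_def by auto
  have key: "(X + a \<cdot>\<^sub>m 1\<^sub>m d) * (Y + b \<cdot>\<^sub>m 1\<^sub>m d) = (X * Y + b \<cdot>\<^sub>m X + a \<cdot>\<^sub>m Y) + (a * b) \<cdot>\<^sub>m 1\<^sub>m d"
    if X: "X \<in> carrier_mat d d" and Y: "Y \<in> carrier_mat d d" for X Y :: "complex mat" and a b
  proof -
    have e1: "(X + a \<cdot>\<^sub>m 1\<^sub>m d) * (Y + b \<cdot>\<^sub>m 1\<^sub>m d) = X * (Y + b \<cdot>\<^sub>m 1\<^sub>m d) + (a \<cdot>\<^sub>m 1\<^sub>m d) * (Y + b \<cdot>\<^sub>m 1\<^sub>m d)"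
      by (rule add_mult_distrib_mat[of _ d d]) (use X Y in auto)
    have e2a: "X * (Y + b \<cdot>\<^sub>m 1\<^sub>m d) = X * Y + X * (b \<cdot>\<^sub>m 1\<^sub>m d)"
      by (rule mult_add_distrib_mat[of _ d d]) (use X Y in auto)
    have e2b: "X * (b \<cdot>\<^sub>m 1\<^sub>m d) = b \<cdot>\<^sub>m X"
      using mult_smult_distrib[of X d d "1\<^sub>m d" d b] X by simp
    have e3a: "(a \<cdot>\<^sub>m 1\<^sub>m d) * (Y + b \<cdot>\<^sub>m 1\<^sub>m d) = a \<cdot>\<^sub>m (Y + b \<cdot>\<^sub>m 1\<^sub>m d)"
      using mult_smult_assoc_mat[of "1\<^sub>m d" d d "Y + b \<cdot>\<^sub>m 1\<^sub>m d" d a] Y by simp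
    have e3b: "a \<cdot>\<^sub>m (Y + b \<cdot>\<^sub>m 1\<^sub>m d) = a \<cdot>\<^sub>m Y + (a * b) \<cdot>\<^sub>m 1\<^sub>m d"
      by (rule eq_matI) (use Y in \<open>auto simp: algebra_simps\<close>)
    have e4: "X * Y + b \<cdot>\<^sub>m X + (a \<cdot>\<^sub>m Y + (a * b) \<cdot>\<^sub>m 1\<^sub>m d) = (X * Y + b \<cdot>\<^sub>m X + a \<cdot>\<^sub>m Y) + (a * b) \<cdot>\<^sub>m 1\<^sub>m d"
      by (rule eq_matI) (use X Y in \<open>auto simp: algebra_simps\<close>)
    show ?thesis unfolding e1 e2a e2b e3a e3b e4 ..
  qed
  define S' where "S' = {X + c \<cdot>\<^sub>m 1\<^sub>m d | X c. X \<in> S}"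
  have S'iff: "Z \<in> S' \<longleftrightarrow> (\<exists>X c. Z = X + c \<cdot>\<^sub>m 1\<^sub>m d \<and> X \<in> S)" for Z unfolding S'_def by blast
  have sub: "S \<subseteq> S'"
  proof
    fix X assume X: "X \<in> S"
    have "X = X + 0 \<cdot>\<^sub>m 1\<^sub>m d" by (rule eq_matI) (use Sc[OF X] in auto)
    thus "X \<in> S'" unfolding S'iff using X by blast
  qed
  have cs': "comm_mat_subalg d S'"
    unfolding comm_mat_subalg_def mat_subalg_def mat_subspace_def
  proof (intro conjI ballI allI)
    show "S' \<subseteq> carrier_mat d d" using Sc unfolding S'_def by auto
    show "0\<^sub>m d d \<in> S'" using sub S0 by auto
  next
    fix Z1 Z2 assume Z1: "Z1 \<in> S'" and Z2: "Z2 \<in> S'"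
    obtain X a where Xa: "Z1 = X + a \<cdot>\<^sub>m 1\<^sub>m d" "X \<in> S" using Z1 unfolding S'iff by blast
    obtain Y b where Yb: "Z2 = Y + b \<cdot>\<^sub>m 1\<^sub>m d" "Y \<in> S" using Z2 unfolding S'iff by blast
    have X: "X \<in> carrier_mat d d" and Y: "Y \<in> carrier_mat d d" using Sc Xa Yb by auto
    have "Z1 + Z2 = (X + Y) + (a + b) \<cdot>\<^sub>m 1\<^sub>m d"
      unfolding Xa Yb by (rule eq_matI) (use X Y in \<open>auto simp: algebra_simps\<close>)
    thus "Z1 + Z2 \<in> S'" unfolding S'iff using Sadd[OF Xa(2) Yb(2)] by blast
    have p: "Z1 * Z2 = (X * Y + b \<cdot>\<^sub>m X + a \<cdot>\<^sub>m Y) + (a * b) \<cdot>\<^sub>m 1\<^sub>m d"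
      unfolding Xa Yb by (rule key[OF X Y])
    have "X * Y + b \<cdot>\<^sub>m X + a \<cdot>\<^sub>m Y \<in> S"
      using Sadd[OF Sadd[OF Smul[OF Xa(2) Yb(2)] Ssm[OF Xa(2)]] Ssm[OF Yb(2)]] .
    thus "Z1 * Z2 \<in> S'" unfolding S'iff p by blast
    have q: "Z2 * Z1 = (Y * X + a \<cdot>\<^sub>m Y + b \<cdot>\<^sub>m X) + (b * a) \<cdot>\<^sub>m 1\<^sub>m d"
      unfolding Xa Yb by (rule key[OF Y X])
    have "X * Y + b \<cdot>\<^sub>m X + a \<cdot>\<^sub>m Y = Y * X + a \<cdot>\<^sub>m Y + b \<cdot>\<^sub>m X"
      unfolding Scomm[OF Xa(2) Yb(2)] by (rule eq_matI) (use X Y in \<open>auto simp: algebra_simps\<close>)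
    thus "Z1 * Z2 = Z2 * Z1" unfolding p q by (simp add: mult.commute)
  next
    fix c Z assume Z: "Z \<in> S'"
    obtain X a where Xa: "Z = X + a \<cdot>\<^sub>m 1\<^sub>m d" "X \<in> S" using Z unfolding S'iff by blast
    have X: "X \<in> carrier_mat d d" using Sc Xa by auto
    have "c \<cdot>\<^sub>m Z = c \<cdot>\<^sub>m X + (c * a) \<cdot>\<^sub>m 1\<^sub>m d"
      unfolding Xa by (rule eq_matI) (use X in \<open>auto simp: algebra_simps\<close>)
    thus "c \<cdot>\<^sub>m Z \<in> S'" unfolding S'iff using Ssm[OF Xa(2)] by blast
  qed
  have "S' = S" by (rule mx[OF cs' sub])
  moreover have "1\<^sub>m d \<in> S'"
  proof -
    have "(1\<^sub>m d :: complex mat) = 0\<^sub>m d d + 1 \<cdot>\<^sub>m 1\<^sub>m d" by (rule eq_matI) auto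
    thus ?thesis unfolding S'iff using S0 by blast
  qed
  ultimately show ?thesis by simp
qed


theorem theorem4p5:
  fixes n d :: nat and \<A> \<B> :: "complex mat set"
  assumes "n \<ge> 2" and "d \<ge> 1"
    and "maximal_comm_subalg d \<A>"
    and "maximal_subalg_in (n*d) (toeplitz_set n d \<A>) \<B>"
  shows "diag_toeplitz_set n d \<A> \<subseteq> \<B>
    \<and> (\<forall>A\<in>\<B>. \<forall>k<n. E_op n d k A \<in> \<B>)
    \<and> \<B> = mat_span (n*d) (\<Union>k<n. E_op n d k ` \<B>)
    \<and> (\<forall>\<sigma>. \<sigma> permutes {1..n-1} \<longrightarrow> (\<forall>A\<in>\<B>. perm_act n d \<sigma> A \<in> \<B>))
    \<and> (\<forall>k<n. E_op n d k ` \<B> \<noteq> {0\<^sub>m (n*d) (n*d)})"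
proof -
  interpret TT n d \<A>
    by (rule TT.intro) (use assms max_comm_one[OF assms(3)] in \<open>auto simp: maximal_comm_subalg_def\<close>)
  show ?thesis by (rule main[OF assms(4)])
qed

end
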